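(* Let $X$ be a locally compact metrizable space, $F$ a discrete multivalued dynamical system on $X$ and $N$ an isolating neighborhood for $F$. Then for every $n\in\mathbb{N}$ there exist weak index pairs $P^1,\dots,P^n$ in $N$ such that $P^i_1\subset\operatorname{int}_N P^{i+1}_1$ and $P^i_2\subset\operatorname{int}_N P^{i+1}_2$ for $i=1,\dots,n-1$.
   Context: A discrete multivalued dynamical system (dmds) on $X$ is a usc map $F:X\times\mathbb{Z}\multimap X$ with compact values such that $F(x,0)=\{x\}$; $F(F(x,n),m)=F(x,n+m)$ whenever $nm\ge0$; $y\in F(x,-1)\iff x\in F(y,1)$; it is identified with its generator $F=F(\cdot,1)$. A solution through $x$ on an interval $I\ni0$ of $\mathbb{Z}$ is $\sigma:I\to X$ with $\sigma(0)=x$, $\sigma(n+1)\in F(\sigma(n))$; $\operatorname{Inv}N$ is the set of $x\in N$ with a solution $\sigma:\mathbb{Z}\to N$ through $x$. A compact $N$ is an isolating neighborhood if $\operatorname{Inv}N\subset\operatorname{int}N$. With $\operatorname{bd}_FA:=\operatorname{cl}A\cap\operatorname{cl}(F(A)\setminus A)$, a weak index pair in $N$ is a pair of compact sets $P_2\subset P_1\subset N$ with (a) $F(P_i)\cap N\subset P_i$ for $i=1,2$, (b) $\operatorname{bd}_FP_1\subset P_2$, (c) $\operatorname{Inv}N\subset\operatorname{int}(P_1\setminus P_2)$, (d) $P_1\setminus P_2\subset\operatorname{int}N$. $\operatorname{int}_N$ denotes interior relative to $N$. *)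

theory Defs
  imports "HOL-Analysis.Analysis"
begin

text \<open>A multivalued map F : X x Z -o X is represented as F :: 'a => int => 'a set,
  with F x n standing for F(x,n). The space X is the type 'a (a metric space).\<close>

definition usc_map :: "('b::topological_space \<Rightarrow> 'a::topological_space set) \<Rightarrow> bool" where
  "usc_map G \<longleftrightarrow> (\<forall>z U. open U \<and> G z \<subseteq> U \<longrightarrow>
      (\<exists>W. open W \<and> z \<in> W \<and> (\<forall>w\<in>W. G w \<subseteq> U)))"

definition dmds :: "('a::metric_space \<Rightarrow> int \<Rightarrow> 'a set) \<Rightarrow> bool" where
  "dmds F \<longleftrightarrow>
     usc_map (\<lambda>(x, n). F x n) \<and>
     (\<forall>x n. compact (F x n)) \<and>
     (\<forall>x. F x 0 = {x}) \<and>
     (\<forall>x n m. n * m \<ge> 0 \<longrightarrow> (\<Union>y\<in>F x n. F y m) = F x (n + m)) \<and>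
     (\<forall>x y. y \<in> F x (-1) \<longleftrightarrow> x \<in> F y 1)"

definition img :: "('a \<Rightarrow> int \<Rightarrow> 'a set) \<Rightarrow> 'a set \<Rightarrow> 'a set" where
  "img F A = (\<Union>x\<in>A. F x 1)"

definition Inv :: "('a \<Rightarrow> int \<Rightarrow> 'a set) \<Rightarrow> 'a set \<Rightarrow> 'a set" where
  "Inv F N = {x \<in> N. \<exists>\<sigma>::int \<Rightarrow> 'a. \<sigma> 0 = x \<and> (\<forall>n. \<sigma> n \<in> N) \<and>
                        (\<forall>n. \<sigma> (n + 1) \<in> F (\<sigma> n) 1)}"

definition isolating_nbhd :: "('a::metric_space \<Rightarrow> int \<Rightarrow> 'a set) \<Rightarrow> 'a set \<Rightarrow> bool" where
  "isolating_nbhd F N \<longleftrightarrow> compact N \<and> Inv F N \<subseteq> interior N"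

definition bdF :: "('a::metric_space \<Rightarrow> int \<Rightarrow> 'a set) \<Rightarrow> 'a set \<Rightarrow> 'a set" where
  "bdF F A = closure A \<inter> closure (img F A - A)"

definition weak_index_pair ::
    "('a::metric_space \<Rightarrow> int \<Rightarrow> 'a set) \<Rightarrow> 'a set \<Rightarrow> 'a set \<Rightarrow> 'a set \<Rightarrow> bool" where
  "weak_index_pair F N P1 P2 \<longleftrightarrow>
     compact P1 \<and> compact P2 \<and> P2 \<subseteq> P1 \<and> P1 \<subseteq> N \<and>
     img F P1 \<inter> N \<subseteq> P1 \<and> img F P2 \<inter> N \<subseteq> P2 \<and>
     bdF F P1 \<subseteq> P2 \<and>
     Inv F N \<subseteq> interior (P1 - P2) \<and>
     P1 - P2 \<subseteq> interior N"

definition intN :: "'a::topological_space set \<Rightarrow> 'a set \<Rightarrow> 'a set" where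
  "intN N A = (top_of_set N) interior_of A"

end

theory Submission imports Defs begin

lemma nest:
  fixes C :: "nat \<Rightarrow> 'a::t2_space set"
  assumes cC: "\<And>k. compact (C k)" and dec: "\<And>k. C (Suc k) \<subseteq> C k" and ne: "\<And>k. C k \<noteq> {}"
  shows "(\<Inter>k. C k) \<noteq> {}"
proof -
  have anti: "\<And>k l. k \<le> l \<Longrightarrow> C l \<subseteq> C k"
    using lift_Suc_antimono_le[of C, OF dec] by blast
  have "C 0 \<inter> \<Inter>(range C) \<noteq> {}"
  proof (rule compact_imp_fip[OF cC])
    show "\<And>T. T \<in> range C \<Longrightarrow> closed T" using cC compact_imp_closed by blast
  next
    fix F' assume "finite F'" "F' \<subseteq> range C"
    then obtain I where I: "finite I" "F' = C ` I" by (meson finite_subset_image)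
    show "C 0 \<inter> \<Inter>F' \<noteq> {}"
    proof (cases "I = {}")
      case True then show ?thesis using I ne by auto
    next
      case False
      have "\<forall>i\<in>I. C (Max I) \<subseteq> C i" using I(1) anti Max_ge by blast
      moreover have "C (Max I) \<subseteq> C 0" using anti by blast
      ultimately have "C (Max I) \<subseteq> C 0 \<inter> \<Inter>F'" using I(2) by blast
      then show ?thesis using ne by blast
    qed
  qed
  then show ?thesis by auto
qed

lemma sep2:
  fixes P A :: "'a::metric_space set"
  assumes "compact P" "closed A" "P \<inter> A = {}"
  shows "\<exists>E \<eta>. closed E \<and> E \<inter> A = {} \<and> \<eta> > 0 \<and> (\<forall>x\<in>P. \<forall>y. dist y x < \<eta> \<longrightarrow> y \<in> E)"
proof (cases "A = {}")
  case True
  then show ?thesis by (intro exI[of _ UNIV] exI[of _ 1]) auto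
next
  case Ane: False
  show ?thesis
  proof (cases "P = {}")
    case True
    then show ?thesis by (intro exI[of _ "{}"] exI[of _ 1]) auto
  next
    case False
    have "continuous_on P (\<lambda>x. infdist x A)" by (intro continuous_intros)
    then obtain x0 where x0: "x0 \<in> P" "\<forall>y\<in>P. infdist x0 A \<le> infdist y A"
      using continuous_attains_inf[OF assms(1) False] by blast
    define e where "e = infdist x0 A"
    have "x0 \<notin> A" using x0 assms(3) by blast
    then have epos: "e > 0" unfolding e_def using infdist_pos_not_in_closed[OF assms(2) Ane] by blast
    define E where "E = {y. e/2 \<le> infdist y A}"
    have cE: "closed E" unfolding E_def
      by (rule closed_Collect_le) (intro continuous_intros)+
    have dE: "E \<inter> A = {}" unfolding E_def using epos by auto
    have "\<forall>x\<in>P. \<forall>y. dist y x < e/2 \<longrightarrow> y \<in> E"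
    proof (intro ballI allI impI)
      fix x y assume "x \<in> P" "dist y x < e/2"
      have "infdist x A \<le> infdist y A + dist x y" by (rule infdist_triangle)
      moreover have "e \<le> infdist x A" using x0 \<open>x \<in> P\<close> unfolding e_def by blast
      ultimately show "y \<in> E" unfolding E_def using \<open>dist y x < e/2\<close> by (simp add: dist_commute)
    qed
    then show ?thesis using cE dE epos by (intro exI[of _ E] exI[of _ "e/2"]) auto
  qed
qed

lemma intN_I:
  fixes N A :: "'a::metric_space set"
  assumes "x \<in> N" "e > 0" "\<forall>y\<in>N. dist y x < e \<longrightarrow> y \<in> A"
  shows "x \<in> intN N A"
proof -
  have "openin (top_of_set N) (N \<inter> ball x e)" by (rule openin_open_Int) simp
  moreover have "x \<in> N \<inter> ball x e" using assms by simp
  moreover have "N \<inter> ball x e \<subseteq> A" using assms(3) by (auto simp: dist_commute)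
  ultimately show ?thesis unfolding intN_def interior_of_def by blast
qed

lemma combine:
  fixes a :: nat and Q :: "nat \<Rightarrow> nat \<Rightarrow> bool"
  assumes "\<forall>j<a. \<exists>k. Q j k" and "\<And>j k k'. Q j k \<Longrightarrow> k \<le> k' \<Longrightarrow> Q j k'"
  shows "\<exists>k. \<forall>j<a. Q j k"
  using assms(1)
proof (induction a)
  case 0 then show ?case by simp
next
  case (Suc a)
  then obtain k where k: "\<forall>j<a. Q j k" by auto
  obtain k2 where k2: "Q a k2" using Suc.prems by auto
  have "\<forall>j<Suc a. Q j (max k k2)"
    using k k2 assms(2) by (metis less_Suc_eq max.cobounded1 max.cobounded2)
  then show ?case by blast
qed

locale sys =
  fixes F :: "'a::metric_space \<Rightarrow> int \<Rightarrow> 'a set" and N :: "'a set"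
  assumes uscf: "\<And>x U. open U \<Longrightarrow> F x 1 \<subseteq> U \<Longrightarrow> \<exists>W. open W \<and> x \<in> W \<and> (\<forall>w\<in>W. F w 1 \<subseteq> U)"
    and uscg: "\<And>x U. open U \<Longrightarrow> F x (-1) \<subseteq> U \<Longrightarrow> \<exists>W. open W \<and> x \<in> W \<and> (\<forall>w\<in>W. F w (-1) \<subseteq> U)"
    and cf: "\<And>x. compact (F x 1)"
    and cg: "\<And>x. compact (F x (-1))"
    and rel: "\<And>x y. y \<in> F x (-1) \<longleftrightarrow> x \<in> F y 1"
    and cN: "compact N"
    and iso: "Inv F N \<subseteq> interior N"
begin

definition bimg :: "'a set \<Rightarrow> 'a set" where "bimg C = (\<Union>x\<in>C. F x (-1))"

primrec phi :: "'a set \<Rightarrow> nat \<Rightarrow> 'a set" where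
  "phi C 0 = C"
| "phi C (Suc j) = N \<inter> img F (phi C j)"

primrec R :: "'a set \<Rightarrow> nat \<Rightarrow> 'a set" where
  "R Z 0 = Z"
| "R Z (Suc i) = N \<inter> bimg (R Z i)"

definition phiL :: "'a set \<Rightarrow> nat \<Rightarrow> 'a set" where "phiL C a = (\<Union>j<a. phi C j)"
definition Pone :: "'a set \<Rightarrow> nat \<Rightarrow> 'a set" where "Pone K a = phiL K a \<union> phi N a"
definition Bd :: "'a set" where "Bd = N - interior N"

lemma img_eq: "img F C = {y. F y (-1) \<inter> C \<noteq> {}}"
  unfolding img_def using rel by blast
lemma bimg_eq: "bimg C = {y. F y 1 \<inter> C \<noteq> {}}"
  unfolding bimg_def using rel by blast

lemma closed_img: assumes "closed C" shows "closed (img F C)"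
proof -
  have "\<forall>y \<in> - img F C. \<exists>T. open T \<and> y \<in> T \<and> T \<subseteq> - img F C"
  proof
    fix y assume "y \<in> - img F C"
    then have "F y (-1) \<subseteq> - C" by (auto simp: img_eq)
    then obtain W where "open W" "y \<in> W" "\<forall>w\<in>W. F w (-1) \<subseteq> -C"
      using uscg[of "-C" y] assms by auto
    note W = this
    have "W \<subseteq> - img F C" using W(3) by (auto simp: img_eq)
    then show "\<exists>T. open T \<and> y \<in> T \<and> T \<subseteq> - img F C" using W(1,2) by blast
  qed
  then have "open (- img F C)" using open_subopen by blast
  then show ?thesis by (simp add: closed_open)
qed

lemma closed_bimg: assumes "closed C" shows "closed (bimg C)"
proof -
  have "\<forall>y \<in> - bimg C. \<exists>T. open T \<and> y \<in> T \<and> T \<subseteq> - bimg C"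
  proof
    fix y assume "y \<in> - bimg C"
    then have "F y 1 \<subseteq> - C" by (auto simp: bimg_eq)
    then obtain W where "open W" "y \<in> W" "\<forall>w\<in>W. F w 1 \<subseteq> -C"
      using uscf[of "-C" y] assms by auto
    note W = this
    have "W \<subseteq> - bimg C" using W(3) by (auto simp: bimg_eq)
    then show "\<exists>T. open T \<and> y \<in> T \<and> T \<subseteq> - bimg C" using W(1,2) by blast
  qed
  then have "open (- bimg C)" using open_subopen by blast
  then show ?thesis by (simp add: closed_open)
qed

lemma phi_sub: "C \<subseteq> N \<Longrightarrow> phi C j \<subseteq> N"
  by (induction j) auto

lemma compact_phi: "compact C \<Longrightarrow> C \<subseteq> N \<Longrightarrow> compact (phi C j)"
proof (induction j)
  case 0 then show ?case by simp
next
  case (Suc j)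
  then show ?case using compact_Int_closed[OF cN closed_img[OF compact_imp_closed]] by simp
qed

lemma R_sub: "Z \<subseteq> N \<Longrightarrow> R Z i \<subseteq> N"
  by (induction i) auto

lemma compact_R: "compact Z \<Longrightarrow> Z \<subseteq> N \<Longrightarrow> compact (R Z i)"
proof (induction i)
  case 0 then show ?case by simp
next
  case (Suc j)
  then show ?case using compact_Int_closed[OF cN closed_bimg[OF compact_imp_closed]] by simp
qed

lemma img_mono: "C \<subseteq> D \<Longrightarrow> img F C \<subseteq> img F D" unfolding img_def by auto
lemma bimg_mono: "C \<subseteq> D \<Longrightarrow> bimg C \<subseteq> bimg D" unfolding bimg_def by auto

lemma phi_mono: "C \<subseteq> D \<Longrightarrow> phi C j \<subseteq> phi D j"
  by (induction j) (auto simp: img_def)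

lemma phi_add: "phi (phi C j) i = phi C (i + j)"
  by (induction i) auto

lemma phiN_dec: "phi N (Suc k) \<subseteq> phi N k"
  by (induction k) (auto simp: img_def)

lemma phiN_anti: "k \<le> l \<Longrightarrow> phi N l \<subseteq> phi N k"
  using lift_Suc_antimono_le[of "phi N", OF phiN_dec] by blast

lemma RN_dec: "R N (Suc k) \<subseteq> R N k"
  by (induction k) (auto simp: bimg_def)

lemma RN_anti: "k \<le> l \<Longrightarrow> R N l \<subseteq> R N k"
  using lift_Suc_antimono_le[of "R N", OF RN_dec] by blast

lemma path1: "C \<subseteq> N \<Longrightarrow> Z \<subseteq> N \<Longrightarrow> y \<in> phi C j \<Longrightarrow> y \<in> R Z i \<Longrightarrow> \<exists>c\<in>C. c \<in> R Z (i + j)"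
proof (induction j arbitrary: y i)
  case 0 then show ?case by auto
next
  case (Suc j)
  from Suc.prems(3) obtain x where x: "x \<in> phi C j" "y \<in> F x 1" by (auto simp: img_def)
  have "x \<in> N" using x(1) phi_sub[OF Suc.prems(1)] by auto
  then have "x \<in> R Z (Suc i)" using x(2) Suc.prems(4) by (auto simp: bimg_eq)
  from Suc.IH[OF Suc.prems(1,2) x(1) this] show ?case by simp
qed

lemma path2: "Z \<subseteq> N \<Longrightarrow> x \<in> R Z i \<Longrightarrow> x \<in> phi N m \<Longrightarrow> \<exists>y\<in>Z. y \<in> phi N (m + i)"
proof (induction i arbitrary: x m)
  case 0 then show ?case by auto
next
  case (Suc i)
  from Suc.prems(2) obtain z where z: "z \<in> R Z i" "z \<in> F x 1" by (auto simp: bimg_eq)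
  have "z \<in> N" using z(1) R_sub[OF Suc.prems(1)] by auto
  then have "z \<in> phi N (Suc m)" using z(2) Suc.prems(3) by (auto simp: img_def)
  from Suc.IH[OF Suc.prems(1) z(1) this] show ?case by simp
qed


definition Am :: "'a set" where "Am = (\<Inter>k. phi N k)"
definition Ap :: "'a set" where "Ap = (\<Inter>k. R N k)"

lemma sol_phi: fixes \<sigma> :: "int \<Rightarrow> 'a" assumes "\<forall>n. \<sigma> n \<in> N" "\<forall>n. \<sigma> (n+1) \<in> F (\<sigma> n) 1"
  shows "\<sigma> n \<in> phi N k"
proof (induction k arbitrary: n)
  case 0 then show ?case using assms by simp
next
  case (Suc k)
  have "\<sigma> ((n - 1) + 1) \<in> F (\<sigma> (n-1)) 1" using assms(2) by blast
  then have "\<sigma> n \<in> F (\<sigma> (n-1)) 1" by simp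
  then show ?case using Suc.IH[of "n-1"] assms(1) by (auto simp: img_def)
qed

lemma sol_R: fixes \<sigma> :: "int \<Rightarrow> 'a" assumes "\<forall>n. \<sigma> n \<in> N" "\<forall>n. \<sigma> (n+1) \<in> F (\<sigma> n) 1"
  shows "\<sigma> n \<in> R N k"
proof (induction k arbitrary: n)
  case 0 then show ?case using assms by simp
next
  case (Suc k)
  then show ?case using Suc.IH[of "n+1"] assms by (auto simp: bimg_eq)
qed

lemma Inv_sub: "Inv F N \<subseteq> Am \<inter> Ap"
proof
  fix x assume "x \<in> Inv F N"
  then obtain \<sigma> :: "int \<Rightarrow> 'a" where s: "\<sigma> 0 = x" "\<forall>n. \<sigma> n \<in> N" "\<forall>n. \<sigma> (n + 1) \<in> F (\<sigma> n) 1"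
    unfolding Inv_def by blast
  have "\<forall>k. \<sigma> 0 \<in> phi N k" using sol_phi[OF s(2,3)] by blast
  moreover have "\<forall>k. \<sigma> 0 \<in> R N k" using sol_R[OF s(2,3)] by blast
  ultimately show "x \<in> Am \<inter> Ap" unfolding Am_def Ap_def using s(1) by blast
qed

lemma Ap_N: "Ap \<subseteq> N"
proof -
  have "Ap \<subseteq> R N 0" unfolding Ap_def by blast
  then show ?thesis by simp
qed
lemma Am_N: "Am \<subseteq> N"
proof -
  have "Am \<subseteq> phi N 0" unfolding Am_def by blast
  then show ?thesis by simp
qed

lemma step_fwd: assumes "x \<in> Ap" shows "\<exists>y\<in>F x 1. y \<in> Ap"
proof -
  have "(\<Inter>k. F x 1 \<inter> R N k) \<noteq> {}"
  proof (rule nest)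
    fix k
    show "compact (F x 1 \<inter> R N k)"
      by (rule compact_Int_closed[OF cf compact_imp_closed[OF compact_R[OF cN]]]) simp
    show "F x 1 \<inter> R N (Suc k) \<subseteq> F x 1 \<inter> R N k" using RN_dec by blast
    have "x \<in> R N (Suc k)" using assms unfolding Ap_def by blast
    then show "F x 1 \<inter> R N k \<noteq> {}" by (auto simp: bimg_eq)
  qed
  then show ?thesis unfolding Ap_def by auto
qed

lemma step_bwd: assumes "x \<in> Am" shows "\<exists>w. x \<in> F w 1 \<and> w \<in> Am"
proof -
  have "(\<Inter>k. F x (-1) \<inter> phi N k) \<noteq> {}"
  proof (rule nest)
    fix k
    show "compact (F x (-1) \<inter> phi N k)"
      by (rule compact_Int_closed[OF cg compact_imp_closed[OF compact_phi[OF cN]]]) simp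
    show "F x (-1) \<inter> phi N (Suc k) \<subseteq> F x (-1) \<inter> phi N k" using phiN_dec by blast
    have "x \<in> phi N (Suc k)" using assms unfolding Am_def by blast
    then show "F x (-1) \<inter> phi N k \<noteq> {}" by (auto simp: img_eq)
  qed
  then obtain w where "\<forall>k. w \<in> F x (-1) \<inter> phi N k" by auto
  then show ?thesis unfolding Am_def using rel by blast
qed

lemma Inv_eq: "Inv F N = Am \<inter> Ap"
proof
  show "Inv F N \<subseteq> Am \<inter> Ap" by (rule Inv_sub)
next
  show "Am \<inter> Ap \<subseteq> Inv F N"
  proof
    fix x assume x: "x \<in> Am \<inter> Ap"
    define nx where "nx y = (SOME z. z \<in> F y 1 \<and> z \<in> Ap)" for y
    define pv where "pv y = (SOME w. y \<in> F w 1 \<and> w \<in> Am)" for y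
    have nx: "nx y \<in> F y 1 \<and> nx y \<in> Ap" if "y \<in> Ap" for y
      unfolding nx_def using step_fwd[OF that] someI_ex[of "\<lambda>z. z \<in> F y 1 \<and> z \<in> Ap"] by blast
    have pv: "y \<in> F (pv y) 1 \<and> pv y \<in> Am" if "y \<in> Am" for y
      unfolding pv_def using step_bwd[OF that] someI_ex[of "\<lambda>w. y \<in> F w 1 \<and> w \<in> Am"] by blast
    have nxA: "(nx ^^ k) x \<in> Ap" for k
      by (induction k) (use x nx in auto)
    have pvA: "(pv ^^ k) x \<in> Am" for k
      by (induction k) (use x pv in auto)
    define \<sigma> where "\<sigma> n = (if 0 \<le> n then (nx ^^ nat n) x else (pv ^^ nat (-n)) x)" for n :: int
    have s0: "\<sigma> 0 = x" unfolding \<sigma>_def by simp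
    have sN: "\<forall>n. \<sigma> n \<in> N" unfolding \<sigma>_def using nxA pvA Ap_N Am_N by auto
    have sF: "\<forall>n. \<sigma> (n+1) \<in> F (\<sigma> n) 1"
    proof
      fix n :: int
      show "\<sigma> (n+1) \<in> F (\<sigma> n) 1"
      proof (cases "0 \<le> n")
        case True
        then have "nat (n+1) = Suc (nat n)" by simp
        then show ?thesis using True nx[OF nxA[of "nat n"]] unfolding \<sigma>_def by simp
      next
        case False
        define m where "m = nat (-n-1)"
        have e1: "\<sigma> (n+1) = (pv ^^ m) x"
          using False unfolding \<sigma>_def m_def by (cases "n = -1") auto
        have "nat (-n) = Suc m" using False unfolding m_def by simp
        then have e2: "\<sigma> n = pv ((pv ^^ m) x)" using False unfolding \<sigma>_def by simp
        show ?thesis using e1 e2 pv[OF pvA[of m]] by simp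
      qed
    qed
    have "x \<in> N" using x Am_N by blast
    then show "x \<in> Inv F N" unfolding Inv_def using s0 sN sF by blast
  qed
qed

lemma compact_Inv: "compact (Inv F N)"
proof -
  have "closed Am" unfolding Am_def using compact_phi[OF cN] compact_imp_closed by blast
  moreover have "closed Ap" unfolding Ap_def using compact_R[OF cN] compact_imp_closed by blast
  ultimately have "closed (Inv F N)" by (simp add: Inv_eq closed_Int)
  then have "compact (N \<inter> Inv F N)" using compact_Int_closed[OF cN] by blast
  moreover have "N \<inter> Inv F N = Inv F N" using Inv_eq Ap_N by blast
  ultimately show ?thesis by simp
qed


lemma closed_Bd: "closed Bd" unfolding Bd_def using cN compact_imp_closed by blast
lemma compact_Bd: "compact Bd"
proof -
  have "Bd = N \<inter> - interior N" unfolding Bd_def by blast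
  then show ?thesis using compact_Int_closed[OF cN closed_Compl[OF open_interior]] by simp
qed
lemma closed_phiN: "closed (phi N k)" using compact_phi[OF cN] compact_imp_closed by blast
lemma closed_RN: "closed (R N k)" using compact_R[OF cN] compact_imp_closed by blast

lemma Inv_R: "Inv F N \<subseteq> R N k" using Inv_sub unfolding Ap_def by blast
lemma Inv_phi: "Inv F N \<subseteq> phi N k" using Inv_sub unfolding Am_def by blast

lemma iso_m: "\<exists>m. Bd \<inter> phi N m \<inter> R N m = {}"
proof (rule ccontr)
  assume "\<not> ?thesis"
  then have ne: "\<And>k. Bd \<inter> phi N k \<inter> R N k \<noteq> {}" by blast
  have "(\<Inter>k. Bd \<inter> phi N k \<inter> R N k) \<noteq> {}"
  proof (rule nest[OF _ _ ne])
    fix k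
    show "compact (Bd \<inter> phi N k \<inter> R N k)"
      using compact_Int_closed[OF compact_Bd closed_Int[OF closed_phiN closed_RN]] by (simp add: Int_assoc)
    show "Bd \<inter> phi N (Suc k) \<inter> R N (Suc k) \<subseteq> Bd \<inter> phi N k \<inter> R N k"
      using phiN_dec RN_dec by blast
  qed
  then obtain x where "\<forall>k. x \<in> Bd \<inter> phi N k \<inter> R N k" by blast
  then have "x \<in> Bd" "x \<in> Am \<inter> Ap" unfolding Am_def Ap_def by auto
  then show False using Inv_eq iso unfolding Bd_def by blast
qed

lemma phiL_sub: "C \<subseteq> N \<Longrightarrow> phiL C a \<subseteq> N" unfolding phiL_def using phi_sub by blast
lemma Pone_N: "K \<subseteq> N \<Longrightarrow> Pone K a \<subseteq> N" unfolding Pone_def using phiL_sub phi_sub[of N] by blast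
lemma compact_phiL: "compact C \<Longrightarrow> C \<subseteq> N \<Longrightarrow> compact (phiL C a)"
  unfolding phiL_def by (intro compact_UN) (auto intro: compact_phi)
lemma compact_Pone: "compact K \<Longrightarrow> K \<subseteq> N \<Longrightarrow> compact (Pone K a)"
  unfolding Pone_def using compact_phiL compact_phi[OF cN] by blast
lemma L_phiL: "1 \<le> b \<Longrightarrow> L \<subseteq> phiL L b"
proof -
  assume "1 \<le> b"
  then have "phi L 0 \<subseteq> phiL L b" unfolding phiL_def by (intro UN_upper) simp
  then show ?thesis by simp
qed
lemma K_Pone: "K \<subseteq> N \<Longrightarrow> K \<subseteq> Pone K a"
proof (cases a)
  case 0
  then show "K \<subseteq> N \<Longrightarrow> K \<subseteq> Pone K a" unfolding Pone_def by auto
next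
  case (Suc a')
  then have "phi K 0 \<subseteq> phiL K a" unfolding phiL_def by (intro UN_upper) simp
  then show "K \<subseteq> N \<Longrightarrow> K \<subseteq> Pone K a" unfolding Pone_def by auto
qed

lemma Pone_inv: assumes "K \<subseteq> N" shows "img F (Pone K a) \<inter> N \<subseteq> Pone K a"
proof
  fix y assume "y \<in> img F (Pone K a) \<inter> N"
  then obtain x where x: "x \<in> Pone K a" "y \<in> F x 1" "y \<in> N" by (auto simp: img_def)
  show "y \<in> Pone K a"
  proof (cases "x \<in> phi N a")
    case True
    then have "y \<in> phi N (Suc a)" using x by (auto simp: img_def)
    then show ?thesis using phiN_dec unfolding Pone_def by blast
  next
    case False
    then obtain j where j: "j < a" "x \<in> phi K j" using x(1) unfolding Pone_def phiL_def by blast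
    then have y: "y \<in> phi K (Suc j)" using x by (auto simp: img_def)
    show ?thesis
    proof (cases "Suc j < a")
      case True then show ?thesis using y unfolding Pone_def phiL_def by blast
    next
      case False
      then have "Suc j = a" using j by simp
      then have "y \<in> phi N a" using y phi_mono[OF assms] by blast
      then show ?thesis unfolding Pone_def by blast
    qed
  qed
qed

lemma inv_phi: assumes "img F P \<inter> N \<subseteq> P" shows "phi P j \<subseteq> P"
proof (induction j)
  case 0 then show ?case by simp
next
  case (Suc j)
  then have "img F (phi P j) \<subseteq> img F P" by (rule img_mono)
  then show ?case using assms by auto
qed

lemma phi_RN_disj: assumes "C \<subseteq> N" "C \<inter> R N b = {}" shows "phi C j \<inter> R N b = {}"
proof (rule ccontr)
  assume "phi C j \<inter> R N b \<noteq> {}"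
  then obtain y where "y \<in> phi C j" "y \<in> R N b" by blast
  then obtain c where "c \<in> C" "c \<in> R N (b + j)" using path1[OF assms(1) order_refl] by blast
  then show False using RN_anti[of b "b + j"] assms(2) by auto
qed

lemma phiL_RN_disj: "C \<subseteq> N \<Longrightarrow> C \<inter> R N b = {} \<Longrightarrow> phiL C a \<inter> R N b = {}"
  unfolding phiL_def using phi_RN_disj by blast

lemma phiL_inv: assumes "C \<subseteq> N" "C \<inter> R N b = {}" shows "img F (phiL C b) \<inter> N \<subseteq> phiL C b"
proof
  fix y assume "y \<in> img F (phiL C b) \<inter> N"
  then obtain x j where x: "j < b" "x \<in> phi C j" "y \<in> F x 1" "y \<in> N"
    by (auto simp: img_def phiL_def)
  then have y: "y \<in> phi C (Suc j)" by (auto simp: img_def)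
  show "y \<in> phiL C b"
  proof (cases "Suc j < b")
    case True then show ?thesis using y unfolding phiL_def by blast
  next
    case False
    then have "Suc j = b" using x by simp
    then have "y \<in> phi C b" using y by simp
    moreover have "y \<in> R N 0" using x by simp
    ultimately obtain c where "c \<in> C" "c \<in> R N (0 + b)" using path1[OF assms(1) order_refl] by blast
    then show ?thesis using assms(2) by auto
  qed
qed

definition valid :: "'a set \<Rightarrow> nat \<Rightarrow> 'a set \<Rightarrow> nat \<Rightarrow> bool" where
  "valid K a L b \<longleftrightarrow> K \<subseteq> N \<and> compact K \<and> Inv F N \<subseteq> interior K \<and> 1 \<le> b \<and> compact L \<and>
     L \<subseteq> Pone K a \<and> Pone K a \<inter> Bd \<subseteq> L \<and> L \<inter> R N b = {}"

lemma valid_wip: assumes "valid K a L b" shows "weak_index_pair F N (Pone K a) (phiL L b)"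
proof -
  note v = assms[unfolded valid_def]
  let ?P1 = "Pone K a" and ?P2 = "phiL L b"
  have P1N: "?P1 \<subseteq> N" using Pone_N v by blast
  have LN: "L \<subseteq> N" using v P1N by blast
  have cP1: "compact ?P1" using compact_Pone v by blast
  have cP2: "compact ?P2" using compact_phiL v LN by blast
  have inv1: "img F ?P1 \<inter> N \<subseteq> ?P1" using Pone_inv v by blast
  have P2P1: "?P2 \<subseteq> ?P1"
  proof -
    have "\<And>j. phi L j \<subseteq> phi ?P1 j" using phi_mono v by blast
    moreover have "\<And>j. phi ?P1 j \<subseteq> ?P1" using inv_phi[OF inv1] by blast
    ultimately show ?thesis unfolding phiL_def by blast
  qed
  have inv2: "img F ?P2 \<inter> N \<subseteq> ?P2" using phiL_inv LN v by blast
  have LP2: "L \<subseteq> ?P2" using L_phiL v by blast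
  have bd: "bdF F ?P1 \<subseteq> ?P2"
  proof -
    have "closure ?P1 = ?P1" using cP1 compact_imp_closed closure_closed by blast
    moreover have "img F ?P1 - ?P1 \<subseteq> - N" using inv1 by blast
    then have "closure (img F ?P1 - ?P1) \<subseteq> - interior N"
      using closure_mono closure_complement by metis
    ultimately have "bdF F ?P1 \<subseteq> ?P1 \<inter> - interior N" unfolding bdF_def by blast
    also have "\<dots> \<subseteq> ?P1 \<inter> Bd" using P1N unfolding Bd_def by blast
    also have "\<dots> \<subseteq> ?P2" using v LP2 by blast
    finally show ?thesis .
  qed
  have S: "Inv F N \<subseteq> interior (?P1 - ?P2)"
  proof -
    have "Inv F N \<subseteq> interior ?P1" using v K_Pone[of K a] interior_mono by blast
    moreover have "Inv F N \<inter> ?P2 = {}" using Inv_R[of b] phiL_RN_disj[of L b b] LN v by blast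
    moreover have "interior (- ?P2) = - ?P2"
      using cP2 compact_imp_closed interior_open open_Compl by blast
    moreover have "?P1 - ?P2 = ?P1 \<inter> - ?P2" by blast
    ultimately show ?thesis by auto
  qed
  have D: "?P1 - ?P2 \<subseteq> interior N" using P1N v LP2 unfolding Bd_def by blast
  show ?thesis unfolding weak_index_pair_def
    using cP1 cP2 P2P1 P1N inv1 inv2 bd S D by blast
qed


lemma base: "\<exists>K L m. valid K m L m"
proof -
  obtain m0 where m0: "Bd \<inter> phi N m0 \<inter> R N m0 = {}" using iso_m by blast
  define m where "m = Suc m0"
  have "phi N m \<subseteq> phi N m0" "R N m \<subseteq> R N m0" unfolding m_def by (rule phiN_dec, rule RN_dec)
  then have isom: "Bd \<inter> phi N m \<inter> R N m = {}" using m0 by blast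
  define Z where "Z = Bd \<inter> R N m"
  have ZN: "Z \<subseteq> N" unfolding Z_def Bd_def by blast
  have cZ: "compact Z" unfolding Z_def using compact_Int_closed[OF compact_Bd closed_RN] by blast
  define B where "B = (\<Union>i<m. R Z i)"
  have cB: "compact B" unfolding B_def by (intro compact_UN) (auto intro: compact_R[OF cZ ZN])
  have SB: "Inv F N \<inter> B = {}"
  proof (rule ccontr)
    assume "Inv F N \<inter> B \<noteq> {}"
    then obtain x i where x: "x \<in> Inv F N" "x \<in> R Z i" unfolding B_def by blast
    have "x \<in> phi N m" using x Inv_phi by blast
    then obtain y where "y \<in> Z" "y \<in> phi N (m + i)" using path2[OF ZN x(2)] by blast
    then show False using isom phiN_anti[of m "m+i"] unfolding Z_def by auto
  qed
  define Op where "Op = interior N - B"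
  have oOp: "open Op" unfolding Op_def using cB compact_imp_closed by blast
  have SOp: "Inv F N \<subseteq> Op" unfolding Op_def using SB iso by blast
  obtain E \<eta> where E: "closed E" "E \<inter> - Op = {}" "\<eta> > 0" "\<forall>x\<in>Inv F N. \<forall>y. dist y x < \<eta> \<longrightarrow> y \<in> E"
  proof -
    have "closed (- Op)" using oOp by (rule closed_Compl)
    moreover have "Inv F N \<inter> - Op = {}" using SOp by blast
    ultimately show ?thesis using sep2[OF compact_Inv] that by metis
  qed
  define K where "K = E"
  have KOp: "K \<subseteq> Op" using E unfolding K_def by blast
  then have KN: "K \<subseteq> N" unfolding Op_def using interior_subset by blast
  have cK: "compact K"
  proof -
    have "compact (N \<inter> K)" using compact_Int_closed[OF cN] E(1) unfolding K_def by blast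
    then show ?thesis using KN by (simp add: Int_absorb1)
  qed
  have SK: "Inv F N \<subseteq> interior K"
  proof
    fix x assume "x \<in> Inv F N"
    then have "ball x \<eta> \<subseteq> K" using E(4) unfolding K_def by (auto simp: dist_commute)
    then show "x \<in> interior K" using E(3) mem_interior by blast
  qed
  define L where "L = Pone K m \<inter> Bd"
  have cL: "compact L" unfolding L_def using compact_Int_closed[OF compact_Pone[OF cK KN] closed_Bd] .
  have LR: "L \<inter> R N m = {}"
  proof (rule ccontr)
    assume "L \<inter> R N m \<noteq> {}"
    then obtain y where y: "y \<in> Pone K m" "y \<in> Bd" "y \<in> R N m" unfolding L_def by blast
    show False
    proof (cases "y \<in> phi N m")
      case True then show False using y isom by blast
    next
      case False
      then obtain i where i: "i < m" "y \<in> phi K i" using y(1) unfolding Pone_def phiL_def by blast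
      have "y \<in> R Z 0" using y unfolding Z_def by simp
      then obtain c where "c \<in> K" "c \<in> R Z (0 + i)" using path1[OF KN ZN i(2)] by blast
      then have "c \<in> B" using i unfolding B_def by auto
      then show False using \<open>c \<in> K\<close> KOp unfolding Op_def by blast
    qed
  qed
  have "L \<subseteq> Pone K m" "Pone K m \<inter> Bd \<subseteq> L" unfolding L_def by auto
  moreover have "1 \<le> m" unfolding m_def by simp
  ultimately have "valid K m L m" unfolding valid_def using KN cK SK cL LR by blast
  then show ?thesis by blast
qed

lemma commute_phi:
  assumes cD: "\<And>k. compact (D k)" and DN: "\<And>k. D k \<subseteq> N" and dec: "\<And>k. D (Suc k) \<subseteq> D k"
  shows "(\<Inter>k. phi (D k) j) \<subseteq> phi (\<Inter>k. D k) j"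
proof (induction j)
  case 0 then show ?case by simp
next
  case (Suc j)
  show ?case
  proof
    fix y assume y: "y \<in> (\<Inter>k. phi (D k) (Suc j))"
    then have yN: "y \<in> N" by auto
    have "(\<Inter>k. F y (-1) \<inter> phi (D k) j) \<noteq> {}"
    proof (rule nest)
      fix k
      show "compact (F y (-1) \<inter> phi (D k) j)"
        using compact_Int_closed[OF cg compact_imp_closed[OF compact_phi[OF cD DN]]] .
      show "F y (-1) \<inter> phi (D (Suc k)) j \<subseteq> F y (-1) \<inter> phi (D k) j" using phi_mono[OF dec] by blast
      have "y \<in> img F (phi (D k) j)" using y by auto
      then show "F y (-1) \<inter> phi (D k) j \<noteq> {}" by (auto simp: img_eq)
    qed
    then obtain c where c: "c \<in> F y (-1)" "\<forall>k. c \<in> phi (D k) j" by blast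
    then have "c \<in> phi (\<Inter>k. D k) j" using Suc.IH by blast
    moreover have "y \<in> F c 1" using c rel by blast
    ultimately show "y \<in> phi (\<Inter>k. D k) (Suc j)" using yN by (auto simp: img_def)
  qed
qed


lemma step:
  assumes va: "valid K a L b"
  shows "\<exists>K' L'. valid K' a L' b \<and> Pone K a \<subseteq> intN N (Pone K' a) \<and> phiL L b \<subseteq> intN N (phiL L' b)"
proof -
  note v = va[unfolded valid_def]
  have vS: "Inv F N \<subseteq> interior K" and vb: "1 \<le> b" and vcL: "compact L" and vLP: "L \<subseteq> Pone K a"
    and vBd: "Pone K a \<inter> Bd \<subseteq> L" and vLR: "L \<inter> R N b = {}" using v by auto
  have KN: "K \<subseteq> N" using v by blast
  have P1N: "Pone K a \<subseteq> N" using Pone_N KN by blast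
  have LN: "L \<subseteq> N" using vLP P1N by blast
  have cP2: "compact (phiL L b)" using compact_phiL vcL LN by blast
  have inv1: "img F (Pone K a) \<inter> N \<subseteq> Pone K a" using Pone_inv KN by blast
  have P2P1: "phiL L b \<subseteq> Pone K a"
  proof -
    have "\<And>j. phi L j \<subseteq> phi (Pone K a) j" using phi_mono vLP by blast
    moreover have "\<And>j. phi (Pone K a) j \<subseteq> Pone K a" using inv_phi[OF inv1] by blast
    ultimately show ?thesis unfolding phiL_def by blast
  qed
  show ?thesis
  proof (cases "Pone K a = {}")
    case True
    then have "phiL L b = {}" using P2P1 by blast
    then have "Pone K a \<subseteq> intN N (Pone K a) \<and> phiL L b \<subseteq> intN N (phiL L b)" using True by simp
    then show ?thesis using va by blast
  next
    case ne: False
    define P1 where "P1 = Pone K a"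
    define Kd where "Kd \<delta> = N \<inter> {x. infdist x P1 \<le> \<delta>}" for \<delta> :: real
    have cKd: "compact (Kd \<delta>)" for \<delta>
    proof -
      have "closed {x. infdist x P1 \<le> \<delta>}" by (rule closed_Collect_le) (intro continuous_intros)+
      then show ?thesis unfolding Kd_def using compact_Int_closed[OF cN] by blast
    qed
    have KdN: "Kd \<delta> \<subseteq> N" for \<delta> unfolding Kd_def by blast
    have P1Kd: "P1 \<subseteq> Kd \<delta>" if "0 \<le> \<delta>" for \<delta> using that P1N unfolding Kd_def P1_def by auto
    define D where "D k = Kd (1 / real (Suc k))" for k
    have Ddec: "D (Suc k) \<subseteq> D k" for k
    proof -
      have "1 / real (Suc (Suc k)) \<le> 1 / real (Suc k)" by (rule divide_left_mono) auto
      then show ?thesis unfolding D_def Kd_def by force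
    qed
    have cD: "\<And>k. compact (D k)" unfolding D_def by (rule cKd)
    have DN: "\<And>k. D k \<subseteq> N" unfolding D_def by (rule KdN)
    have Danti: "k \<le> k' \<Longrightarrow> D k' \<subseteq> D k" for k k'
      using lift_Suc_antimono_le[of D, OF Ddec] by blast
    have cP1: "compact P1" unfolding P1_def using compact_Pone KN v by blast
    have DInt: "(\<Inter>k. D k) \<subseteq> P1"
    proof
      fix x assume x: "x \<in> (\<Inter>k. D k)"
      have "infdist x P1 = 0"
      proof (rule ccontr)
        assume "infdist x P1 \<noteq> 0"
        then have "infdist x P1 > 0" using infdist_nonneg[of x P1] by linarith
        then obtain n where n: "inverse (real (Suc n)) < infdist x P1" using reals_Archimedean by blast
        have "x \<in> D n" using x by blast
        then have "infdist x P1 \<le> 1 / real (Suc n)" unfolding D_def Kd_def by blast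
        then show False using n by (simp add: inverse_eq_divide)
      qed
      then have "x \<in> closure P1" using in_closure_iff_infdist_zero ne unfolding P1_def by blast
      then show "x \<in> P1" using cP1 compact_imp_closed closure_closed by blast
    qed
    have claim: "\<forall>j<a. \<exists>k. phi (D k) j \<inter> (Bd \<inter> R N b) = {}"
    proof (intro allI impI)
      fix j assume "j < a"
      show "\<exists>k. phi (D k) j \<inter> (Bd \<inter> R N b) = {}"
      proof (rule ccontr)
        assume "\<not> ?thesis"
        then have nek: "\<And>k. phi (D k) j \<inter> (Bd \<inter> R N b) \<noteq> {}" by blast
        have "(\<Inter>k. phi (D k) j \<inter> (Bd \<inter> R N b)) \<noteq> {}"
        proof (rule nest[OF _ _ nek])
          fix k
          show "compact (phi (D k) j \<inter> (Bd \<inter> R N b))"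
            using compact_Int_closed[OF compact_phi[OF cD DN] closed_Int[OF closed_Bd closed_RN]] .
          show "phi (D (Suc k)) j \<inter> (Bd \<inter> R N b) \<subseteq> phi (D k) j \<inter> (Bd \<inter> R N b)"
            using phi_mono[OF Ddec] by blast
        qed
        then obtain y where y: "y \<in> (\<Inter>k. phi (D k) j)" "y \<in> Bd" "y \<in> R N b" by blast
        have "y \<in> phi (\<Inter>k. D k) j"
          using commute_phi[of D j, OF cD DN Ddec] y(1) by blast
        then have "y \<in> phi P1 j" using phi_mono[OF DInt] by blast
        then have "y \<in> P1" using inv_phi[OF inv1] unfolding P1_def by blast
        then have "y \<in> L" using y(2) vBd unfolding P1_def by blast
        then show False using y(3) vLR by blast
      qed
    qed
    obtain k where k: "\<forall>j<a. phi (D k) j \<inter> (Bd \<inter> R N b) = {}"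
    proof -
      have "\<exists>k. \<forall>j<a. phi (D k) j \<inter> (Bd \<inter> R N b) = {}"
      proof (rule combine[OF claim])
        fix j k k' assume "phi (D k) j \<inter> (Bd \<inter> R N b) = {}" "k \<le> k'"
        then show "phi (D k') j \<inter> (Bd \<inter> R N b) = {}" using phi_mono[OF Danti] by blast
      qed
      then show ?thesis using that by blast
    qed
    define \<delta> where "\<delta> = 1 / real (Suc k)"
    have dpos: "\<delta> > 0" unfolding \<delta>_def by simp
    define K' where "K' = D k"
    have K'eq: "K' = Kd \<delta>" unfolding K'_def D_def \<delta>_def by simp
    have K'N: "K' \<subseteq> N" and cK': "compact K'" using KdN cKd K'eq by auto
    have P2R: "phiL L b \<inter> R N b = {}" using phiL_RN_disj LN vLR by blast
    obtain E \<eta> where E: "closed E" "E \<inter> R N b = {}" "\<eta> > 0"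
      "\<forall>x\<in>phiL L b. \<forall>y. dist y x < \<eta> \<longrightarrow> y \<in> E"
      using sep2[OF cP2 closed_RN P2R] by blast
    define L' where "L' = Pone K' a \<inter> (E \<union> - interior N)"
    have P1K': "P1 \<subseteq> K'" using P1Kd dpos K'eq by auto
    have v': "valid K' a L' b"
    proof -
      have "Inv F N \<subseteq> interior K'"
      proof -
        have "K \<subseteq> K'" using K_Pone[OF KN, of a] P1K' unfolding P1_def by blast
        then show ?thesis using vS interior_mono by blast
      qed
      moreover have "compact L'"
      proof -
        have "closed (E \<union> - interior N)" using E(1) closed_Compl[OF open_interior] by blast
        then show ?thesis unfolding L'_def using compact_Int_closed[OF compact_Pone[OF cK' K'N]] by blast
      qed
      moreover have "L' \<subseteq> Pone K' a" "Pone K' a \<inter> Bd \<subseteq> L'" unfolding L'_def Bd_def by auto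
      moreover have "L' \<inter> R N b = {}"
      proof (rule ccontr)
        assume "L' \<inter> R N b \<noteq> {}"
        then obtain y where y: "y \<in> L'" "y \<in> R N b" by blast
        have "y \<notin> E" using y E(2) by blast
        have yP: "y \<in> Pone K' a" using y(1) unfolding L'_def by blast
        have "y \<in> - interior N" using y(1) \<open>y \<notin> E\<close> unfolding L'_def by blast
        then have yB: "y \<in> Bd" using yP Pone_N[OF K'N] unfolding Bd_def by blast
        show False
        proof (cases "y \<in> phi N a")
          case True
          then have "y \<in> Pone K a" unfolding Pone_def by blast
          then have "y \<in> L" using yB vBd by blast
          then show False using y(2) vLR by blast
        next
          case False
          then obtain j where "j < a" "y \<in> phi K' j" using yP unfolding Pone_def phiL_def by blast
          then show False using k yB y(2) unfolding K'_def by blast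
        qed
      qed
      ultimately show ?thesis unfolding valid_def using K'N cK' vb by blast
    qed
    have n1: "Pone K a \<subseteq> intN N (Pone K' a)"
    proof
      fix x assume x: "x \<in> Pone K a"
      show "x \<in> intN N (Pone K' a)"
      proof (rule intN_I[OF _ dpos])
        show "x \<in> N" using x P1N by blast
        show "\<forall>y\<in>N. dist y x < \<delta> \<longrightarrow> y \<in> Pone K' a"
        proof (intro ballI impI)
          fix y assume "y \<in> N" "dist y x < \<delta>"
          then have "infdist y P1 \<le> \<delta>" using infdist_le[of x P1 y] x unfolding P1_def by simp
          then have "y \<in> K'" using \<open>y \<in> N\<close> unfolding K'eq Kd_def by blast
          then show "y \<in> Pone K' a" using K_Pone[OF K'N] by blast
        qed
      qed
    qed
    have n2: "phiL L b \<subseteq> intN N (phiL L' b)"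
    proof
      fix x assume x: "x \<in> phiL L b"
      have xP1: "x \<in> P1" using x P2P1 unfolding P1_def by blast
      show "x \<in> intN N (phiL L' b)"
      proof (rule intN_I)
        show "x \<in> N" using xP1 P1N unfolding P1_def by blast
        show "min \<delta> \<eta> > 0" using dpos E(3) by simp
        show "\<forall>y\<in>N. dist y x < min \<delta> \<eta> \<longrightarrow> y \<in> phiL L' b"
        proof (intro ballI impI)
          fix y assume yN: "y \<in> N" and d: "dist y x < min \<delta> \<eta>"
          then have "infdist y P1 \<le> \<delta>" using infdist_le[of x P1 y] xP1 by simp
          then have "y \<in> K'" using yN unfolding K'eq Kd_def by blast
          then have "y \<in> Pone K' a" using K_Pone[OF K'N] by blast
          moreover have "y \<in> E" using E(4) x d by simp
          ultimately have "y \<in> L'" unfolding L'_def by blast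
          then show "y \<in> phiL L' b" using L_phiL vb by blast
        qed
      qed
    qed
    show ?thesis using v' n1 n2 by blast
  qed
qed

end

lemma usc_slice:
  fixes F :: "'a::metric_space \<Rightarrow> int \<Rightarrow> 'a set"
  assumes "usc_map (\<lambda>(x, n). F x n)" "open U" "F x n \<subseteq> U"
  shows "\<exists>W. open W \<and> x \<in> W \<and> (\<forall>w\<in>W. F w n \<subseteq> U)"
proof -
  have "(\<lambda>(x, n). F x n) (x, n) \<subseteq> U" using assms(3) by simp
  then have "\<exists>W. open W \<and> (x, n) \<in> W \<and> (\<forall>w\<in>W. (\<lambda>(x, n). F x n) w \<subseteq> U)"
    using assms(1,2) unfolding usc_map_def by (elim allE[of _ "(x, n)"] allE[of _ U]) (erule impE, rule conjI)
  then obtain W0 where W0: "open W0" "(x, n) \<in> W0" "\<forall>w\<in>W0. (\<lambda>(x, n). F x n) w \<subseteq> U"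
    by blast
  obtain A B where AB: "open A" "open B" "(x, n) \<in> A \<times> B" "A \<times> B \<subseteq> W0"
    using open_prod_elim[OF W0(1,2)] by blast
  have "\<forall>w\<in>A. F w n \<subseteq> U"
  proof
    fix w assume "w \<in> A"
    then have "(w, n) \<in> W0" using AB by blast
    then have "(\<lambda>(x, n). F x n) (w, n) \<subseteq> U" using W0(3) by blast
    then show "F w n \<subseteq> U" by simp
  qed
  then show ?thesis using AB by blast
qed

theorem mainTheorem6:
  fixes F :: "'a::metric_space \<Rightarrow> int \<Rightarrow> 'a set" and N :: "'a set" and n :: nat
  assumes "locally_compact_space (euclidean :: 'a topology)"
    and "dmds F"
    and "isolating_nbhd F N"
  shows "\<exists>P1 P2 :: nat \<Rightarrow> 'a set.
           (\<forall>i\<in>{1..n}. weak_index_pair F N (P1 i) (P2 i)) \<and>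
           (\<forall>i\<in>{1..<n}. P1 i \<subseteq> intN N (P1 (Suc i)) \<and> P2 i \<subseteq> intN N (P2 (Suc i)))"
proof -
  note d = assms(2)[unfolded dmds_def]
  note i = assms(3)[unfolded isolating_nbhd_def]
  have u: "usc_map (\<lambda>(x, n). F x n)" using d by (rule conjunct1)
  have c: "\<forall>x n. compact (F x n)" using d[THEN conjunct2, THEN conjunct1] .
  have r: "\<forall>x y. y \<in> F x (-1) \<longleftrightarrow> x \<in> F y 1"
    using d[THEN conjunct2, THEN conjunct2, THEN conjunct2, THEN conjunct2] .
  have cN0: "compact N" using i by (rule conjunct1)
  have iso0: "Inv F N \<subseteq> interior N" using i by (rule conjunct2)
  interpret sys F N
  proof (unfold_locales)
    show "\<And>x U. open U \<Longrightarrow> F x 1 \<subseteq> U \<Longrightarrow> \<exists>W. open W \<and> x \<in> W \<and> (\<forall>w\<in>W. F w 1 \<subseteq> U)"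
      by (rule usc_slice[OF u])
    show "\<And>x U. open U \<Longrightarrow> F x (-1) \<subseteq> U \<Longrightarrow> \<exists>W. open W \<and> x \<in> W \<and> (\<forall>w\<in>W. F w (-1) \<subseteq> U)"
      by (rule usc_slice[OF u])
    show "\<And>x. compact (F x 1)" using c by blast
    show "\<And>x. compact (F x (-1))" using c by blast
    show "\<And>x y. y \<in> F x (-1) \<longleftrightarrow> x \<in> F y 1" using r by blast
    show "compact N" by (rule cN0)
    show "Inv F N \<subseteq> interior N" by (rule iso0)
  qed
  obtain K0 L0 m where v0: "valid K0 m L0 m" using base by blast
  define Q where "Q p q \<longleftrightarrow> valid (fst q) m (snd q) m \<and> Pone (fst p) m \<subseteq> intN N (Pone (fst q) m)
      \<and> phiL (snd p) m \<subseteq> intN N (phiL (snd q) m)" for p q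
  define nx where "nx p = (SOME q. Q p q)" for p
  have nxQ: "Q p (nx p)" if vp: "valid (fst p) m (snd p) m" for p
  proof -
    obtain K' L' where "valid K' m L' m \<and> Pone (fst p) m \<subseteq> intN N (Pone K' m) \<and> phiL (snd p) m \<subseteq> intN N (phiL L' m)"
      using step[OF vp] by blast
    then have "Q p (K', L')" unfolding Q_def by simp
    then show ?thesis unfolding nx_def by (rule someI)
  qed
  define sq where "sq i = (nx ^^ i) (K0, L0)" for i
  have vsq: "valid (fst (sq i)) m (snd (sq i)) m" for i
  proof (induction i)
    case 0 then show ?case using v0 unfolding sq_def by simp
  next
    case (Suc i)
    have "sq (Suc i) = nx (sq i)" unfolding sq_def by simp
    then show ?case using nxQ[OF Suc.IH] unfolding Q_def by simp
  qed
  have nest_sq: "Q (sq i) (sq (Suc i))" for i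
  proof -
    have "sq (Suc i) = nx (sq i)" unfolding sq_def by simp
    then show ?thesis using nxQ[OF vsq[of i]] by simp
  qed
  define P1 where "P1 i = Pone (fst (sq i)) m" for i
  define P2 where "P2 i = phiL (snd (sq i)) m" for i
  have "\<forall>i. weak_index_pair F N (P1 i) (P2 i)" unfolding P1_def P2_def using valid_wip vsq by blast
  moreover have "\<forall>i. P1 i \<subseteq> intN N (P1 (Suc i)) \<and> P2 i \<subseteq> intN N (P2 (Suc i))"
    using nest_sq unfolding Q_def P1_def P2_def by blast
  ultimately show ?thesis by blast
qed
end
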